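(* For every integer $n\geqslant1$, \begin{align*} &\sum_{k=0}^{n-1}(-1)^{k}\frac{2k+1}{(n-k)(n+k+1)} \sum_{m=k}^{n-1}(-1)^{m}\frac{2m+1}{(n-m)(n+m+1)}\\ &\qquad=\frac{\pi^{2}}{12}-\frac{\gamma}{2n+1} +\frac{1}{2}[\psi(2n+1)-\psi(n+1)]^{2} -\frac{1}{2n+1}\psi(2n+1)-\frac{1}{2}\psi_{1}(2n+1). \end{align*}
   Context: $\psi=\Gamma'/\Gamma$ is the digamma function, $\psi_1=\psi'$ the trigamma function, and $\gamma$ the Euler–Mascheroni constant. *)

theory Defs
  imports "HOL-Analysis.Analysis"
begin

end

theory Submission imports Defs begin

lemma pairsum: fixes n :: nat shows "2 * (\<Sum>k<n. a k * (\<Sum>m=k..<n. a m)) = (\<Sum>k<n. a k)^2 + (\<Sum>k<n. (a k)^2 :: real)"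
proof (induction n)
  case (Suc n)
  have "(\<Sum>k<Suc n. a k * (\<Sum>m=k..<Suc n. a m)) = (\<Sum>k<n. a k * (\<Sum>m=k..<n. a m)) + (\<Sum>k<n. a k) * a n + a n ^2"
    by (simp add: sum_distrib_right distrib_left sum.distrib power2_eq_square)
  then show ?case using Suc by (simp add: power2_eq_square algebra_simps)
qed simp

lemma reidx1: fixes n :: nat shows "(\<Sum>k<n. f (n-k)) = (\<Sum>j=1..n. f j :: real)"
proof (induction n arbitrary: f)
  case (Suc n)
  have "(\<Sum>k<Suc n. f (Suc n - k)) = f (Suc n) + (\<Sum>k<n. f (n - k))"
    by (subst sum.lessThan_Suc_shift) simp
  also have "\<dots> = (\<Sum>j=1..Suc n. f j)" using Suc by simp
  finally show ?case .
qed simp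

lemma reidx2: fixes n :: nat shows "(\<Sum>k<n. f (n+k+1)) = (\<Sum>j=n+1..2*n. f j :: real)"
proof -
  have "(\<Sum>j=n+1..2*n. f j) = (\<Sum>j=n+1..n+n. f j)" by (simp add: mult_2)
  also have "\<dots> = (\<Sum>j=0+(n+1)..<n+(n+1). f j)"
    by (rule sum.cong) auto
  also have "\<dots> = (\<Sum>k=0..<n. f (k + (n+1)))"
    by (rule sum.shift_bounds_nat_ivl)
  finally show ?thesis by (simp add: atLeast0LessThan add_ac)
qed

lemma reidx: fixes n :: nat shows "(\<Sum>k<n. f (n-k) + f (n+k+1)) = (\<Sum>j=1..2*n. f j :: real)"
proof -
  have "(\<Sum>j=1..2*n. f j) = (\<Sum>j=1..n. f j) + (\<Sum>j=n+1..2*n. f j)"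
    unfolding mult_2 by (rule sum.ub_add_nat) simp
  then show ?thesis by (simp only: sum.distrib reidx1 reidx2)
qed

lemma alt: "(\<Sum>j=1..2*n. (-1)^j / real j) = -(harm (2*n) - harm n :: real)"
proof (induction n)
  case (Suc n)
  have e: "2 * Suc n = Suc (Suc (2*n))" by simp
  have s: "(\<Sum>j=1..2*Suc n. (-1)^j / real j) = (\<Sum>j=1..2*n. (-1)^j / real j) - 1/(2*real n+1) + 1/(2*real n+2)"
    unfolding e by (simp add: field_simps)
  have h: "harm (2*Suc n) = harm (2*n) + 1/(2*real n+1) + 1/(2*real n+2)"
    unfolding e by (simp add: harm_Suc inverse_eq_divide add_ac)
  have h2: "harm (Suc n) = harm n + 1/(real n + 1)"
    by (simp add: harm_Suc inverse_eq_divide add_ac)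
  have q: "1/(real n + 1) = 2 * (1/(2*real n+2))" by (simp add: field_simps)
  show ?case using s h h2 Suc q by linarith
qed (simp add: harm_def)

lemma harmsum: "(\<Sum>j=1..m. 1 / real j) = harm m"
  by (simp add: harm_def inverse_eq_divide)

lemma Poly1_1: "Polygamma 1 (1::real) = pi^2/6"
proof -
  have "Polygamma 1 (1::real) = (\<Sum>k. 1 / (1 + real k)^2)"
    by (simp add: Polygamma_def inverse_eq_divide add_ac power2_eq_square)
  also have "\<dots> = pi^2/6" using inverse_squares_sums
    by (simp add: sums_iff)
  finally show ?thesis .
qed

lemma Poly1_nat: "Polygamma 1 (real m + 1) = pi^2/6 - (\<Sum>j=1..m. 1/(real j)^2)"
proof -
  have "Polygamma 1 (1 + real m) = Polygamma 1 1 + (-1)^1 * fact 1 * (\<Sum>k<m. 1 / (1 + real k) ^ Suc 1)"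
    by (rule Polygamma_plus_of_nat) auto
  moreover have "(\<Sum>k<m. 1 / (1 + real k) ^ Suc 1) = (\<Sum>j=1..m. 1/(real j)^2)"
    by (induction m) (auto simp: add_ac power2_eq_square)
  ultimately have P: "Polygamma 1 (real m + 1) = Polygamma 1 1 - (\<Sum>j=1..m. 1/(real j)^2)" by (simp add: add_ac)
  show ?thesis unfolding P Poly1_1 ..
qed

lemma Dig_nat: "Digamma (real m + 1) = harm m - euler_mascheroni"
  using Digamma_of_nat[of m, where 'a=real] by (simp add: add_ac)


lemma sq_aux:
  fixes x y :: real assumes "x > 0" "y > 0"
  shows "(1/x - 1/y)^2 = (1/x^2 + 1/y^2) - 2/(x+y) * (1/x + 1/y)"
proof -
  have "x + y > 0" using assms by simp
  have a0: "1/x + 1/y = (x+y)/(x*y)" using assms by (simp add: field_simps)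
  have a: "2/(x+y) * (1/x + 1/y) = 2/(x*y)" unfolding a0 using \<open>x+y>0\<close> by (simp add: divide_simps)
  have b: "(1/x - 1/y)^2 = 1/x^2 + 1/y^2 - 2/(x*y)" using assms by (simp add: field_simps power2_eq_square)
  show ?thesis unfolding a b by simp
qed

lemma final_alg:
  fixes N h2 h1 S2 g p :: real
  shows "1/2*((h2-h1)^2 + S2 - 2/N*h2) = p^2/12 - g/N + 1/2*((h2-g)-(h1-g))^2 - (h2-g)/N - 1/2*(p^2/6 - S2)"
  by (simp add: diff_divide_distrib algebra_simps)

lemma term_eq:
  fixes n k :: nat assumes "k < n"
  shows "(-1::real)^k * (2 * real k + 1) / ((real n - real k) * (real n + real k + 1))
         = (-1)^k * (1 / real (n-k) - 1 / real (n+k+1))"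
    and "(-1)^k * (1 / real (n-k) - 1 / real (n+k+1))
         = (-1::real)^n * ((-1)^(n-k) / real (n-k) + (-1)^(n+k+1) / real (n+k+1))"
proof -
  obtain d where d: "n = k + d" "d > 0" using assms by (metis add_diff_inverse_nat less_imp_le_nat not_less zero_less_diff)
  have nk: "n - k = d" using d by simp
  show "(-1::real)^k * (2 * real k + 1) / ((real n - real k) * (real n + real k + 1))
         = (-1)^k * (1 / real (n-k) - 1 / real (n+k+1))"
    unfolding nk using d by (simp add: field_simps)
  have e: "n + k + 1 = d + (k + k + 1)" using d by simp
  show "(-1)^k * (1 / real (n-k) - 1 / real (n+k+1))
         = (-1::real)^n * ((-1)^(n-k) / real (n-k) + (-1)^(n+k+1) / real (n+k+1))"
    unfolding nk e unfolding d(1) by (simp add: power_add field_simps)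
qed

theorem mainTheorem6:
  fixes n :: nat
  assumes "n \<ge> 1"
  shows "(\<Sum>k=0..n-1. (-1::real)^k * (2 * real k + 1) / ((real n - real k) * (real n + real k + 1))
            * (\<Sum>m=k..n-1. (-1::real)^m * (2 * real m + 1) / ((real n - real m) * (real n + real m + 1))))
         = pi^2 / 12 - euler_mascheroni / (2 * real n + 1)
           + (1/2) * (Digamma (2 * real n + 1) - Digamma (real n + 1))^2
           - Digamma (2 * real n + 1) / (2 * real n + 1)
           - (1/2) * Polygamma 1 (2 * real n + 1)"
proof -
  define a where "a k = (-1::real)^k * (2 * real k + 1) / ((real n - real k) * (real n + real k + 1))" for k
  define g where "g j = (-1::real)^j / real j" for j
  define S2 where "S2 = (\<Sum>j=1..2*n. 1/(real j)^2)"
  have iv1: "{0..n-1} = {..<n}" using assms by auto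
  have iv2: "{k..n-1} = {k..<n}" for k using assms by auto
  have L: "(\<Sum>k=0..n-1. a k * (\<Sum>m=k..n-1. a m)) = (\<Sum>k<n. a k * (\<Sum>m=k..<n. a m))"
    unfolding iv2 by (simp add: atLeast0LessThan)
  have ak: "a k = (-1)^n * (g (n-k) + g (n+k+1))" if "k < n" for k
    unfolding a_def g_def using term_eq[OF that] by simp
  have ak2: "(a k)^2 = (1/real (n-k)^2 + 1/real (n+k+1)^2)
       - 2/(2*real n+1) * (1/real (n-k) + 1/real (n+k+1))" if "k < n" for k
  proof -
    have "a k = (-1)^k * (1 / real (n-k) - 1 / real (n+k+1))"
      unfolding a_def using term_eq(1)[OF that] .
    hence "(a k)^2 = (1 / real (n-k) - 1 / real (n+k+1))^2"
      by (simp add: power_mult_distrib power_even_eq[symmetric] flip: power_mult)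
    also have "\<dots> = (1/real (n-k)^2 + 1/real (n+k+1)^2)
       - 2/(2*real n+1) * (1/real (n-k) + 1/real (n+k+1))"
    proof -
      have "real (n-k) + real (n+k+1) = 2*real n+1" using that by (simp add: of_nat_diff)
      moreover have "real (n-k) > 0" "real (n+k+1) > 0" using that by auto
      ultimately show ?thesis using sq_aux[of "real (n-k)" "real (n+k+1)"] by simp
    qed
    finally show ?thesis .
  qed
  have sa: "(\<Sum>k<n. a k) = (-1)^n * (-(harm (2*n) - harm n))"
  proof -
    have "(\<Sum>k<n. a k) = (\<Sum>k<n. (-1)^n * (g (n-k) + g (n+k+1)))"
      by (rule sum.cong) (auto simp: ak)
    also have "\<dots> = (-1)^n * (\<Sum>j=1..2*n. g j)"
      by (simp only: sum_distrib_left[symmetric] reidx)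
    finally show ?thesis unfolding g_def alt .
  qed
  have sa2: "(\<Sum>k<n. (a k)^2) = S2 - 2/(2*real n+1) * harm (2*n)"
  proof -
    have "(\<Sum>k<n. (a k)^2) = (\<Sum>k<n. (1/real (n-k)^2 + 1/real (n+k+1)^2))
       - 2/(2*real n+1) * (\<Sum>k<n. (1/real (n-k) + 1/real (n+k+1)))"
      by (simp add: ak2 sum_subtractf sum_distrib_left)
    also have "(\<Sum>k<n. (1/real (n-k)^2 + 1/real (n+k+1)^2)) = S2"
      unfolding S2_def by (rule reidx)
    also have "(\<Sum>k<n. (1/real (n-k) + 1/real (n+k+1))) = harm (2*n)"
      by (subst reidx) (rule harmsum)
    finally show ?thesis .
  qed
  have LHS: "(\<Sum>k=0..n-1. a k * (\<Sum>m=k..n-1. a m)) = 1/2 * ((harm (2*n) - harm n)^2 + S2 - 2/(2*real n+1) * harm (2*n))"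
  proof -
    have "((-1::real)^n * (-(harm (2*n) - harm n)))^2 = (harm (2*n) - harm n)^2"
      by (simp add: power_mult_distrib power2_commute flip: power_mult)
    then show ?thesis using pairsum[of a n] unfolding L sa sa2 by simp
  qed
  have r: "2 * real n + 1 = real (2*n) + 1" by simp
  have D1: "Digamma (2 * real n + 1) = harm (2*n) - euler_mascheroni" unfolding r by (rule Dig_nat)
  have D2: "Polygamma 1 (2 * real n + 1) = pi^2/6 - S2" unfolding r S2_def by (rule Poly1_nat)
  have D3: "Digamma (real n + 1) = harm n - euler_mascheroni" by (rule Dig_nat)
  have "(\<Sum>k=0..n-1. a k * (\<Sum>m=k..n-1. a m)) = pi^2 / 12 - euler_mascheroni / (2 * real n + 1)
           + (1/2) * (Digamma (2 * real n + 1) - Digamma (real n + 1))^2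
           - Digamma (2 * real n + 1) / (2 * real n + 1)
           - (1/2) * Polygamma 1 (2 * real n + 1)"
    unfolding LHS D1 D2 D3 by (rule final_alg)
  then show ?thesis unfolding a_def .
qed

end
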